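(* Let $K_{n_1,n_2,n_3}$ be the complete tripartite graph with parts $V_1,V_2,V_3$ and vertex set $V=V_1\cup V_2\cup V_3$, where $n_i=|V_i|\ge 2$ for $i=1,2,3$. Then the diameter of the 1-skeleton of $\mathrm{CUT}(K_{n_1,n_2,n_3})$ equals $2$.
   Context: For an undirected graph $G=(V,E)$ and $S\subseteq V$, $\delta(S)\subseteq E$ denotes the set of edges with exactly one endpoint in $S$, and $\mathbf v(S)\in\{0,1\}^{E}$ is its incidence vector ($v(S)_e=1$ iff $e\in\delta(S)$). The cut polytope is $\mathrm{CUT}(G)=\operatorname{conv}\{\mathbf v(S):S\subseteq V\}\subset\mathbb R^{E}$. The 1-skeleton of a polytope is the graph whose vertices are the polytope's vertices and whose edges are its one-dimensional faces; the diameter is the maximum shortest-path edge distance between two vertices of this graph. *)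

theory Defs
  imports "HOL-Analysis.Analysis" "HOL-Library.Extended_Nat"
begin

definition tripartite_edges :: "'v set \<Rightarrow> 'v set \<Rightarrow> 'v set \<Rightarrow> 'v set set" where
  "tripartite_edges V1 V2 V3 =
     {{u, w} | u w. (u \<in> V1 \<and> w \<in> V2) \<or> (u \<in> V1 \<and> w \<in> V3) \<or> (u \<in> V2 \<and> w \<in> V3)}"

text \<open>The space R^E is embedded in real ^ ('v set) (coordinates indexed by all
  subsets of the finite vertex type); coordinates outside E are 0.\<close>
definition cut_vector :: "'v set set \<Rightarrow> 'v set \<Rightarrow> real ^ ('v::finite set)" where
  "cut_vector E S = (\<chi> e. if e \<in> E \<and> card (e \<inter> S) = 1 then 1 else 0)"

definition cut_polytope :: "'v set \<Rightarrow> 'v set set \<Rightarrow> (real ^ ('v::finite set)) set" where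
  "cut_polytope V E = convex hull {cut_vector E S | S. S \<subseteq> V}"

definition skel_adj :: "'a::real_vector set \<Rightarrow> 'a \<Rightarrow> 'a \<Rightarrow> bool" where
  "skel_adj P x y \<longleftrightarrow> x \<noteq> y \<and> x extreme_point_of P \<and> y extreme_point_of P
     \<and> closed_segment x y face_of P"

definition skel_walk :: "'a::real_vector set \<Rightarrow> 'a \<Rightarrow> 'a \<Rightarrow> nat \<Rightarrow> bool" where
  "skel_walk P x y k \<longleftrightarrow> (\<exists>p. length p = Suc k \<and> hd p = x \<and> last p = y
     \<and> (\<forall>i<k. skel_adj P (p ! i) (p ! Suc i)))"

text \<open>Shortest-path distance in the 1-skeleton (infinity if no path).\<close>
definition skel_dist :: "'a::real_vector set \<Rightarrow> 'a \<Rightarrow> 'a \<Rightarrow> enat" where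
  "skel_dist P x y = (INF k \<in> {k. skel_walk P x y k}. enat k)"

definition skel_diameter :: "'a::real_vector set \<Rightarrow> enat" where
  "skel_diameter P = (SUP xy \<in> {(x, y). x extreme_point_of P \<and> y extreme_point_of P}.
                         skel_dist P (fst xy) (snd xy))"

end

theory Submission imports Defs begin

lemma exposed_face_hull:
  fixes X :: "'a::euclidean_space set"
  assumes fin: "finite X" and le: "\<And>z. z \<in> X \<Longrightarrow> a \<bullet> z \<le> b"
  shows "convex hull {z\<in>X. a \<bullet> z = b} face_of convex hull X"
proof -
  have sub: "convex hull X \<subseteq> {x. a \<bullet> x \<le> b}"
    by (rule hull_minimal) (use le convex_halfspace_le in auto)
  have F: "convex hull X \<inter> {x. a \<bullet> x = b} face_of convex hull X"
    by (rule face_of_Int_supporting_hyperplane_le) (use sub in auto)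
  have "convex hull X \<inter> {x. a \<bullet> x = b} = convex hull {z\<in>X. a \<bullet> z = b}"
  proof
    obtain S' where S': "S' \<subseteq> X" "convex hull X \<inter> {x. a \<bullet> x = b} = convex hull S'"
      using face_of_convex_hull_subset[OF finite_imp_compact[OF fin] F] by blast
    have "S' \<subseteq> {z\<in>X. a \<bullet> z = b}" using S' hull_subset[of S' convex] by blast
    then show "convex hull X \<inter> {x. a \<bullet> x = b} \<subseteq> convex hull {z\<in>X. a \<bullet> z = b}"
      using S'(2) hull_mono by metis
  next
    have "convex hull {z\<in>X. a \<bullet> z = b} \<subseteq> {x. a \<bullet> x = b}"
      by (rule hull_minimal) (use convex_hyperplane in auto)
    moreover have "convex hull {z\<in>X. a \<bullet> z = b} \<subseteq> convex hull X" by (rule hull_mono) auto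
    ultimately show "convex hull {z\<in>X. a \<bullet> z = b} \<subseteq> convex hull X \<inter> {x. a \<bullet> x = b}" by blast
  qed
  with F show ?thesis by simp
qed

lemma zo_functional:
  fixes w z :: "real^'n"
  assumes w: "\<And>i. w$i = 0 \<or> w$i = 1" and z: "\<And>i. z$i = 0 \<or> z$i = 1"
  shows "(\<chi> i. if i\<in>C then 2*w$i - 1 else 0) \<bullet> z = (\<Sum>i\<in>C. w$i) - (\<Sum>i\<in>C. if z$i = w$i then 0 else 1)"
proof -
  have "(\<chi> i. if i\<in>C then 2*w$i - 1 else 0) \<bullet> z = (\<Sum>i\<in>UNIV. (if i\<in>C then 2*w$i - 1 else 0) * z$i)"
    by (simp add: inner_vec_def)
  also have "\<dots> = (\<Sum>i\<in>UNIV. if i\<in>C then (2*w$i - 1) * z$i else 0)"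
    by (rule sum.cong) auto
  also have "\<dots> = (\<Sum>i\<in>C. (2*w$i - 1) * z$i)"
    by (simp add: sum.If_cases)
  also have "\<dots> = (\<Sum>i\<in>C. w$i - (if z$i = w$i then 0 else 1))"
    apply (rule sum.cong, simp)
    subgoal for i using w[of i] z[of i] by auto
    done
  also have "\<dots> = (\<Sum>i\<in>C. w$i) - (\<Sum>i\<in>C. if z$i = w$i then 0 else 1)"
    by (simp add: sum_subtractf)
  finally show ?thesis .
qed

lemma agree_face:
  fixes X :: "(real^'n) set"
  assumes fin: "finite X" and zo: "\<And>z i. z \<in> X \<Longrightarrow> z$i = 0 \<or> z$i = 1" and wX: "w \<in> X"
  shows "convex hull {z\<in>X. \<forall>i\<in>C. z$i = w$i} face_of convex hull X"
proof -
  define a where "a = (\<chi> i. if i\<in>C then 2*w$i - 1 else 0)"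
  define b where "b = (\<Sum>i\<in>C. w$i)"
  have eq: "a \<bullet> z = b - (\<Sum>i\<in>C. if z$i = w$i then 0 else 1)" if "z \<in> X" for z
    unfolding a_def b_def by (rule zo_functional) (use zo wX that in auto)
  have nn: "(\<Sum>i\<in>C. if z$i = w$i then 0 else 1::real) \<ge> 0" for z
    by (rule sum_nonneg) auto
  have z0: "(\<Sum>i\<in>C. if z$i = w$i then 0 else 1::real) = 0 \<longleftrightarrow> (\<forall>i\<in>C. z$i = w$i)" for z
    by (subst sum_nonneg_eq_0_iff) auto
  have le: "a \<bullet> z \<le> b" if "z \<in> X" for z
    using eq[OF that] nn[of z] by linarith
  have "convex hull {z\<in>X. a \<bullet> z = b} face_of convex hull X"
    by (rule exposed_face_hull[OF fin le])
  moreover have "{z\<in>X. a \<bullet> z = b} = {z\<in>X. \<forall>i\<in>C. z$i = w$i}"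
  proof (rule Collect_cong)
    fix z show "(z \<in> X \<and> a \<bullet> z = b) = (z \<in> X \<and> (\<forall>i\<in>C. z $ i = w $ i))"
      using eq[of z] z0[of z] by (cases "z \<in> X") simp_all
  qed
  ultimately show ?thesis by simp
qed

lemma agree_adj:
  fixes X :: "(real^'n) set"
  assumes fin: "finite X" and zo: "\<And>z i. z \<in> X \<Longrightarrow> z$i = 0 \<or> z$i = 1" and xX: "x \<in> X"
    and xy: "x \<noteq> y" and S: "{z\<in>X. \<forall>i\<in>C. z$i = x$i} = {x, y}"
  shows "skel_adj (convex hull X) x y"
proof -
  have F: "closed_segment x y face_of convex hull X"
    using agree_face[OF fin zo xX, of C] S by (simp add: segment_convex_hull)
  have "{x} face_of convex hull X" "{y} face_of convex hull X"
    using face_of_trans[OF _ F] face_of_singleton extreme_point_of_segment by blast+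
  then show ?thesis using F xy by (simp add: skel_adj_def face_of_singleton)
qed


definition good :: "('v \<Rightarrow> nat) \<Rightarrow> 'v set \<Rightarrow> bool" where
  "good p X \<longleftrightarrow> X \<noteq> {} \<and> (\<forall>x\<in>X. \<forall>y\<in>X. x = y \<or> (\<exists>z\<in>X. p z \<noteq> p x))"

lemma good_two: assumes "a \<in> X" "b \<in> X" "p a \<noteq> p b" shows "good p X"
proof -
  have "\<exists>z\<in>X. p z \<noteq> p x" for x
  proof (cases "p a = p x")
    case True then show ?thesis using assms by (metis)
  next
    case False then show ?thesis using assms by metis
  qed
  then show ?thesis unfolding good_def using assms by blast
qed

lemma good_single: "good p {x}" by (simp add: good_def)

lemma good_conn:
  assumes "good p X" and h: "\<And>u w. u\<in>X \<Longrightarrow> w\<in>X \<Longrightarrow> p u \<noteq> p w \<Longrightarrow> (u\<in>U \<longleftrightarrow> w\<in>U)"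
  shows "X \<subseteq> U \<or> X \<inter> U = {}"
proof (rule ccontr)
  assume "\<not> ?thesis"
  then obtain x y where xy: "x \<in> X" "x \<in> U" "y \<in> X" "y \<notin> U" by blast
  then have "x \<noteq> y" by auto
  then obtain z where z: "z \<in> X" "p z \<noteq> p x" using assms(1) xy unfolding good_def by blast
  show False
  proof (cases "p y = p x")
    case True
    then show ?thesis using h[OF xy(1) z(1)] h[OF z(1) xy(3)] z xy by auto
  next
    case False
    then show ?thesis using h[OF xy(1) xy(3)] xy by auto
  qed
qed

lemma bad_side: "X \<noteq> {} \<Longrightarrow> \<not> good p X \<Longrightarrow> \<exists>x y. x\<in>X \<and> y\<in>X \<and> x \<noteq> y \<and> (\<forall>z\<in>X. p z = p x)"
  unfolding good_def by blast

lemma comb: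
  assumes pV: "\<And>v. v\<in>V \<Longrightarrow> p v \<in> {1,2,3::nat}"
   and parts: "\<And>i. i \<in> {1,2,3::nat} \<Longrightarrow> \<exists>a b. a\<in>V \<and> b\<in>V \<and> a\<noteq>b \<and> p a = i \<and> p b = i"
   and D: "D \<subseteq> V" "D \<noteq> {}" "V - D \<noteq> {}" "\<not>(good p D \<and> good p (V-D))"
  shows "\<exists>T\<subseteq>V. good p T \<and> good p (V-T) \<and> good p ((T-D)\<union>(D-T)) \<and> good p (V-((T-D)\<union>(D-T)))"
proof -
  obtain X where X: "X = D \<or> X = V - D" "X \<noteq> {}" "\<not> good p X" using D by auto
  obtain x y where xy: "x\<in>X" "y\<in>X" "x\<noteq>y" "\<forall>z\<in>X. p z = p x" using bad_side[OF X(2,3)] by blast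
  have xV: "x \<in> V" "y \<in> V" using X xy D by auto
  have "\<exists>j k. j\<in>{1,2,3::nat} \<and> k\<in>{1,2,3} \<and> j \<noteq> p x \<and> k \<noteq> p x \<and> j \<noteq> k"
  proof -
    from pV[OF xV(1)] consider "p x = 1" | "p x = 2" | "p x = 3" by auto
    then show ?thesis
    proof cases
      case 1 then show ?thesis by (intro exI[of _ "2::nat"] exI[of _ "3::nat"]) auto
    next
      case 2 then show ?thesis by (intro exI[of _ "1::nat"] exI[of _ "3::nat"]) auto
    next
      case 3 then show ?thesis by (intro exI[of _ "1::nat"] exI[of _ "2::nat"]) auto
    qed
  qed
  then obtain j k where jk: "j\<in>{1,2,3::nat}" "k\<in>{1,2,3}" "j \<noteq> p x" "k \<noteq> p x" "j \<noteq> k" by blast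
  obtain w w' where w: "w\<in>V" "w'\<in>V" "w\<noteq>w'" "p w = j" "p w' = j" using parts[OF jk(1)] by blast
  obtain c where c: "c\<in>V" "p c = k" using parts[OF jk(2)] by blast
  have nX: "w \<notin> X" "w' \<notin> X" "c \<notin> X"
    using xy(4) w(4,5) c(2) jk(3,4) by metis+
  have py: "p y = p x" using xy by blast
  have pp: "p w \<noteq> p x" "p c \<noteq> p x" "p c \<noteq> p w" "p w' \<noteq> p c" "p w' \<noteq> p x"
    using w c jk by auto
  have ne: "w \<noteq> x" "w' \<noteq> x" "c \<noteq> x" "c \<noteq> w" "y \<noteq> w" "y \<noteq> c" "w' \<noteq> w"
    using pp py w(3) by metis+
  note xin = xy(1,2) xy(3)
  define T where "T = {x, w}"
  have TV: "T \<subseteq> V" using T_def xV w by auto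
  have g1: "good p T" by (rule good_two[of x _ w]) (use T_def pp in auto)
  have g2: "good p (V - T)" by (rule good_two[of w' _ c]) (use T_def w(2) c(1) ne pp in auto)
  have g34: "good p ((T-D)\<union>(D-T)) \<and> good p (V-((T-D)\<union>(D-T)))"
    using X(1)
  proof
    assume XD: "X = D"
    have "good p ((T-D)\<union>(D-T))" by (rule good_two[of y _ w]) (use T_def nX xin XD ne pp py in auto)
    moreover have "good p (V-((T-D)\<union>(D-T)))"
      by (rule good_two[of x _ c]) (use T_def c(1) nX xin XD ne pp xV in auto)
    ultimately show ?thesis ..
  next
    assume XD: "X = V - D"
    have "good p ((T-D)\<union>(D-T))" by (rule good_two[of x _ c]) (use T_def c(1) nX xin XD ne pp xV in auto)
    moreover have "good p (V-((T-D)\<union>(D-T)))"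
      by (rule good_two[of y _ w]) (use T_def w(1) nX xin XD ne pp py xV in auto)
    ultimately show ?thesis ..
  qed
  show ?thesis using TV g1 g2 g34 by blast
qed


lemma card2_ex: "2 \<le> card A \<Longrightarrow> \<exists>a b. a \<in> A \<and> b \<in> A \<and> a \<noteq> b"
proof -
  assume h: "2 \<le> card A"
  then have fin: "finite A" using card.infinite by fastforce
  have "A \<noteq> {}" using h by auto
  then obtain a where a: "a \<in> A" by blast
  have "card (A - {a}) \<ge> 1" using card_Diff_singleton[OF a] h by simp
  then have "A - {a} \<noteq> {}" by (metis card.empty not_one_le_zero)
  then obtain b where "b \<in> A - {a}" by blast
  then show ?thesis using a by blast
qed

context
  fixes V1 V2 V3 :: "'v::finite set"
  assumes d12: "V1 \<inter> V2 = {}" and d13: "V1 \<inter> V3 = {}" and d23: "V2 \<inter> V3 = {}"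
    and c1: "card V1 \<ge> 2" and c2: "card V2 \<ge> 2" and c3: "card V3 \<ge> 2"
begin

definition "VV = V1 \<union> V2 \<union> V3"
definition "EE = tripartite_edges V1 V2 V3"
definition "pp v = (if v \<in> V1 then 1 else if v \<in> V2 then 2 else (3::nat))"
definition "cv S = cut_vector EE S"
definition "XX = {cv S | S. S \<subseteq> VV}"

lemma edge_iff: "{u,w} \<in> EE \<longleftrightarrow> u \<in> VV \<and> w \<in> VV \<and> pp u \<noteq> pp w"
proof -
  have "{u,w} \<in> EE \<longleftrightarrow> (u\<in>V1\<and>w\<in>V2 \<or> u\<in>V2\<and>w\<in>V1 \<or> u\<in>V1\<and>w\<in>V3 \<or> u\<in>V3\<and>w\<in>V1 \<or> u\<in>V2\<and>w\<in>V3 \<or> u\<in>V3\<and>w\<in>V2)"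
    unfolding EE_def tripartite_edges_def by (auto simp: doubleton_eq_iff)
  also have "\<dots> \<longleftrightarrow> u \<in> VV \<and> w \<in> VV \<and> pp u \<noteq> pp w"
    unfolding VV_def pp_def using d12 d13 d23 by auto
  finally show ?thesis .
qed

lemma edge_form: "e \<in> EE \<Longrightarrow> \<exists>u w. e = {u,w} \<and> u \<in> VV \<and> w \<in> VV \<and> pp u \<noteq> pp w"
proof -
  assume "e \<in> EE"
  then obtain u w where "e = {u,w}" unfolding EE_def tripartite_edges_def by blast
  then show ?thesis using edge_iff \<open>e \<in> EE\<close> by blast
qed

lemma pp_range: "pp v \<in> {1,2,3}" by (simp add: pp_def)

lemma parts: "i \<in> {1,2,3::nat} \<Longrightarrow> \<exists>a b. a\<in>VV \<and> b\<in>VV \<and> a\<noteq>b \<and> pp a = i \<and> pp b = i"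
proof -
  assume "i \<in> {1,2,3::nat}"
  then consider "i = 1" | "i = 2" | "i = 3" by auto
  then show ?thesis
  proof cases
    case 1 then show ?thesis using card2_ex[OF c1] unfolding VV_def pp_def by auto
  next
    case 2 then show ?thesis using card2_ex[OF c2] d12 unfolding VV_def pp_def by auto
  next
    case 3 then show ?thesis using card2_ex[OF c3] d13 d23 unfolding VV_def pp_def by auto
  qed
qed

lemma cv_val: "u \<noteq> w \<Longrightarrow> cv T $ {u,w} = (if {u,w} \<in> EE \<and> (u\<in>T) \<noteq> (w\<in>T) then 1 else 0)"
proof -
  assume "u \<noteq> w"
  then have "card ({u,w} \<inter> T) = 1 \<longleftrightarrow> (u\<in>T) \<noteq> (w\<in>T)"
    by (cases "u \<in> T"; cases "w \<in> T") auto
  then show ?thesis unfolding cv_def cut_vector_def by simp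
qed

lemma cv_zo: "cv T $ e = 0 \<or> cv T $ e = 1"
  unfolding cv_def cut_vector_def by simp

lemma cv_notE: "e \<notin> EE \<Longrightarrow> cv T $ e = 0"
  unfolding cv_def cut_vector_def by simp

lemma cv_eq:
  assumes "\<And>u w. u\<in>VV \<Longrightarrow> w\<in>VV \<Longrightarrow> pp u \<noteq> pp w \<Longrightarrow> ((u\<in>S) \<noteq> (w\<in>S)) = ((u\<in>T) \<noteq> (w\<in>T))"
  shows "cv S = cv T"
proof (rule vec_eq_iff[THEN iffD2], rule allI)
  fix e
  show "cv S $ e = cv T $ e"
  proof (cases "e \<in> EE")
    case True
    then obtain u w where uw: "e = {u,w}" "u \<in> VV" "w \<in> VV" "pp u \<noteq> pp w" using edge_form by blast
    then have "u \<noteq> w" by auto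
    then show ?thesis using cv_val[of u w] uw assms[OF uw(2-4)] by simp
  next
    case False then show ?thesis by (simp add: cv_notE)
  qed
qed

lemma cv_neq:
  assumes "u\<in>VV" "w\<in>VV" "pp u \<noteq> pp w" "((u\<in>S) \<noteq> (w\<in>S)) \<noteq> ((u\<in>T) \<noteq> (w\<in>T))"
  shows "cv S \<noteq> cv T"
proof
  assume "cv S = cv T"
  then have "cv S $ {u,w} = cv T $ {u,w}" by simp
  moreover have "u \<noteq> w" using assms by auto
  moreover have "{u,w} \<in> EE" using assms edge_iff by auto
  ultimately show False using cv_val[of u w] assms(4) by (auto split: if_splits)
qed

lemma XX_fin: "finite XX"
proof -
  have "XX = cv ` Pow VV" unfolding XX_def by auto
  then show ?thesis by simp
qed

lemma XX_zo: "z \<in> XX \<Longrightarrow> z$i = 0 \<or> z$i = 1"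
  unfolding XX_def using cv_zo by auto

lemma cross_exists:
  assumes "D \<subseteq> VV" "D \<noteq> {}" "VV - D \<noteq> {}"
  shows "\<exists>u w. u\<in>D \<and> w\<in>VV-D \<and> pp u \<noteq> pp w"
proof -
  obtain d s where ds: "d \<in> D" "s \<in> VV - D" using assms by blast
  show ?thesis
  proof (cases "pp d = pp s")
    case False then show ?thesis using ds by blast
  next
    case True
    have "\<exists>i\<in>{1,2,3::nat}. i \<noteq> pp d" by auto
    then obtain i where i: "i \<in> {1,2,3::nat}" "i \<noteq> pp d" by blast
    obtain z where z: "z \<in> VV" "pp z = i" using parts[OF i(1)] by blast
    show ?thesis
    proof (cases "z \<in> D")
      case True then show ?thesis using ds z i \<open>pp d = pp s\<close> by (metis)
    next
      case False then show ?thesis using ds z i assms by (metis Diff_iff)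
    qed
  qed
qed

lemma P_eq: "cut_polytope VV EE = convex hull XX"
  unfolding cut_polytope_def XX_def cv_def by simp

lemma adj:
  assumes A: "A \<subseteq> VV" and B: "B \<subseteq> VV" and g1: "good pp ((A-B)\<union>(B-A))"
    and g2: "good pp (VV - ((A-B)\<union>(B-A)))"
  shows "skel_adj (convex hull XX) (cv A) (cv B)"
proof -
  define D where "D = (A-B)\<union>(B-A)"
  have DV: "D \<subseteq> VV" using A B D_def by auto
  have Dne: "D \<noteq> {}" "VV - D \<noteq> {}" using g1 g2 unfolding D_def good_def by auto
  define C where "C = {e\<in>EE. cv D $ e = 0}"
  have AX: "cv A \<in> XX" and BX: "cv B \<in> XX" using A B unfolding XX_def by auto
  have neq: "cv A \<noteq> cv B"
  proof -
    obtain u w where uw: "u\<in>D" "w\<in>VV-D" "pp u \<noteq> pp w" using cross_exists[OF DV Dne] by blast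
    show ?thesis by (rule cv_neq[of u w]) (use uw DV D_def in auto)
  qed
  have agreeB: "\<forall>i\<in>C. cv B $ i = cv A $ i"
  proof
    fix e assume "e \<in> C"
    then have e: "e \<in> EE" "cv D $ e = 0" unfolding C_def by auto
    then obtain u w where uw: "e = {u,w}" "u \<in> VV" "w \<in> VV" "pp u \<noteq> pp w" using edge_form by blast
    have "u \<noteq> w" using uw by auto
    then have "(u\<in>D) = (w\<in>D)" using e cv_val[of u w D] uw by (auto split: if_splits)
    then show "cv B $ e = cv A $ e" using cv_val[of u w] \<open>u \<noteq> w\<close> uw e D_def by auto
  qed
  have S: "{z\<in>XX. \<forall>i\<in>C. z$i = cv A $ i} = {cv A, cv B}"
  proof
    show "{cv A, cv B} \<subseteq> {z\<in>XX. \<forall>i\<in>C. z$i = cv A $ i}" using AX BX agreeB by auto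
  next
    show "{z\<in>XX. \<forall>i\<in>C. z$i = cv A $ i} \<subseteq> {cv A, cv B}"
    proof
      fix z assume z: "z \<in> {z\<in>XX. \<forall>i\<in>C. z$i = cv A $ i}"
      then obtain T where T: "z = cv T" "T \<subseteq> VV" unfolding XX_def by auto
      have ag: "\<forall>i\<in>C. cv T $ i = cv A $ i" using z T by auto
      define U where "U = (T-A)\<union>(A-T)"
      have key: "(u\<in>U) = (w\<in>U)" if "u \<in> VV" "w \<in> VV" "pp u \<noteq> pp w" "(u\<in>D) = (w\<in>D)" for u w
      proof -
        have ne: "u \<noteq> w" using that by auto
        have "{u,w} \<in> EE" using that edge_iff by auto
        moreover have "cv D $ {u,w} = 0" using cv_val[OF ne, of D] that by auto
        ultimately have "{u,w} \<in> C" unfolding C_def by auto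
        then have "cv T $ {u,w} = cv A $ {u,w}" using ag by auto
        then have "((u\<in>T) \<noteq> (w\<in>T)) = ((u\<in>A) \<noteq> (w\<in>A))"
          using cv_val[OF ne, of T] cv_val[OF ne, of A] \<open>{u,w} \<in> EE\<close> by (auto split: if_splits)
        then show ?thesis unfolding U_def by auto
      qed
      have h1: "D \<subseteq> U \<or> D \<inter> U = {}"
        by (rule good_conn[of pp]) (use g1 D_def key DV in auto)
      have h2: "(VV-D) \<subseteq> U \<or> (VV-D) \<inter> U = {}"
        by (rule good_conn[of pp]) (use g2 D_def key in auto)
      have UV: "U \<subseteq> VV" using T A U_def by auto
      have Tdef: "\<And>v. (v \<in> T) = ((v\<in>A) \<noteq> (v\<in>U))" unfolding U_def by auto
      have "cv T = cv A \<or> cv T = cv B"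
        using h1 h2
      proof (elim disjE)
        assume "D \<subseteq> U" "VV - D \<subseteq> U"
        then have "\<forall>v\<in>VV. v \<in> U" by auto
        then have "cv T = cv A" by (intro cv_eq) (simp add: Tdef)
        then show ?thesis ..
      next
        assume "D \<subseteq> U" "(VV - D) \<inter> U = {}"
        then have "\<forall>v\<in>VV. (v \<in> U) = (v \<in> D)" by auto
        then have "cv T = cv B" by (intro cv_eq) (auto simp add: Tdef D_def)
        then show ?thesis ..
      next
        assume "D \<inter> U = {}" "VV - D \<subseteq> U"
        then have "\<forall>v\<in>VV. (v \<in> U) = (v \<notin> D)" by auto
        then have "cv T = cv B" by (intro cv_eq) (auto simp add: Tdef D_def)
        then show ?thesis ..
      next
        assume "D \<inter> U = {}" "(VV - D) \<inter> U = {}"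
        then have "\<forall>v\<in>VV. v \<notin> U" by auto
        then have "cv T = cv A" by (intro cv_eq) (simp add: Tdef)
        then show ?thesis ..
      qed
      then show "z \<in> {cv A, cv B}" using T by auto
    qed
  qed
  show ?thesis by (rule agree_adj[OF XX_fin XX_zo AX neq S])
qed


lemma walk_dist: "skel_walk P x y k \<Longrightarrow> skel_dist P x y \<le> enat k"
  unfolding skel_dist_def by (rule INF_lower2) auto

lemma walk0: "skel_walk P x x 0"
  unfolding skel_walk_def by (rule exI[of _ "[x]"]) simp

lemma walk1: "skel_adj P x y \<Longrightarrow> skel_walk P x y 1"
  unfolding skel_walk_def by (rule exI[of _ "[x,y]"]) simp

lemma walk2: "skel_adj P x z \<Longrightarrow> skel_adj P z y \<Longrightarrow> skel_walk P x y 2"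
  unfolding skel_walk_def
proof (rule exI[of _ "[x,z,y]"], intro conjI allI impI)
  fix i :: nat assume "skel_adj P x z" "skel_adj P z y" "i < 2"
  then show "skel_adj P ([x,z,y] ! i) ([x,z,y] ! Suc i)"
    by (cases i) (auto simp: less_Suc_eq)
qed auto

lemma upper:
  assumes A: "A \<subseteq> VV" and B: "B \<subseteq> VV"
  shows "skel_dist (convex hull XX) (cv A) (cv B) \<le> 2"
proof (cases "cv A = cv B")
  case True
  then show ?thesis using walk_dist[OF walk0, of "convex hull XX" "cv A"] by (simp add: zero_enat_def[symmetric])
next
  case neq: False
  define D where "D = (A-B)\<union>(B-A)"
  have DV: "D \<subseteq> VV" using A B D_def by auto
  have D1: "D \<noteq> {}"
  proof
    assume "D = {}" then have "A = B" unfolding D_def by auto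
    then show False using neq by simp
  qed
  have D2: "VV - D \<noteq> {}"
  proof
    assume "VV - D = {}"
    then have "\<forall>v\<in>VV. (v \<in> B) = (v \<notin> A)" using DV unfolding D_def by auto
    then have "cv A = cv B" by (intro cv_eq) auto
    then show False using neq by simp
  qed
  show ?thesis
  proof (cases "good pp D \<and> good pp (VV - D)")
    case True
    then have "skel_adj (convex hull XX) (cv A) (cv B)" using adj[OF A B] D_def by simp
    then show ?thesis using walk_dist[OF walk1] by (metis enat_ord_number(1) one_enat_def one_le_numeral order_trans)
  next
    case False
    obtain T where T: "T \<subseteq> VV" "good pp T" "good pp (VV-T)" "good pp ((T-D)\<union>(D-T))"
      "good pp (VV-((T-D)\<union>(D-T)))"
      using comb[of VV pp D, OF _ parts DV D1 D2 False] pp_range by blast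
    define A' where "A' = (A-T)\<union>(T-A)"
    have A'V: "A' \<subseteq> VV" using A T A'_def by auto
    have s1: "(A-A')\<union>(A'-A) = T" unfolding A'_def by auto
    have s2: "(A'-B)\<union>(B-A') = (T-D)\<union>(D-T)" unfolding A'_def D_def by auto
    have "skel_adj (convex hull XX) (cv A) (cv A')" using adj[OF A A'V] s1 T by simp
    moreover have "skel_adj (convex hull XX) (cv A') (cv B)" using adj[OF A'V B] s2 T by simp
    ultimately have "skel_walk (convex hull XX) (cv A) (cv B) 2" by (rule walk2)
    then show ?thesis using walk_dist by (metis enat_numeral)
  qed
qed

lemma lower: "\<exists>x y. x extreme_point_of (convex hull XX) \<and> y extreme_point_of (convex hull XX)
   \<and> skel_dist (convex hull XX) x y = 2"
proof -
  obtain a b where ab: "a \<in> V1" "b \<in> V1" "a \<noteq> b" using card2_ex[OF c1] by blast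
  obtain c where c: "c \<in> V2" using card2_ex[OF c2] by blast
  obtain d where d: "d \<in> V3" using card2_ex[OF c3] by blast
  have ppv: "pp a = 1" "pp b = 1" "pp c = 2" "pp d = 3"
    using ab c d d12 d13 d23 unfolding pp_def by auto
  have inV: "a \<in> VV" "b \<in> VV" "c \<in> VV" "d \<in> VV" using ab c d unfolding VV_def by auto
  have ne: "c \<noteq> a" "c \<noteq> b" "d \<noteq> a" "d \<noteq> b" "c \<noteq> d" using ppv by auto
  define P where "P = convex hull XX"
  have ga: "good pp (VV - {a})" by (rule good_two[of c _ d]) (use inV ne ppv in simp_all)
  have gb: "good pp (VV - {b})" by (rule good_two[of c _ d]) (use inV ne ppv in simp_all)
  have A1: "{} \<subseteq> VV" "{a} \<subseteq> VV" "{a,b} \<subseteq> VV" using inV by auto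
  have s0: "({}-{a})\<union>({a}-{}) = {a}" by auto
  have s: "({a}-{a,b})\<union>({a,b}-{a}) = {b}" using ab by auto
  have adj1: "skel_adj P (cv {}) (cv {a})"
    unfolding P_def by (rule adj[OF A1(1) A1(2), unfolded s0, OF good_single ga])
  have adj2: "skel_adj P (cv {a}) (cv {a,b})"
    unfolding P_def by (rule adj[OF A1(2) A1(3), unfolded s, OF good_single gb])
  have ext: "cv {} extreme_point_of P" "cv {a,b} extreme_point_of P"
    using adj1 adj2 unfolding skel_adj_def by auto
  have neq0: "cv {} \<noteq> cv {a,b}"
    by (rule cv_neq[of a c]) (use inV ppv ne in auto)
  have notadj: "\<not> skel_adj P (cv {}) (cv {a,b})"
  proof
    assume "skel_adj P (cv {}) (cv {a,b})"
    then have F: "closed_segment (cv {}) (cv {a,b}) face_of P" unfolding skel_adj_def by auto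
    have sum: "cv {a} + cv {b} = cv {} + cv {a,b}"
    proof (rule vec_eq_iff[THEN iffD2], rule allI)
      fix e
      show "(cv {a} + cv {b}) $ e = (cv {} + cv {a,b}) $ e"
      proof (cases "e \<in> EE")
        case True
        then obtain u w where uw: "e = {u,w}" "u \<in> VV" "w \<in> VV" "pp u \<noteq> pp w" using edge_form by blast
        then have une: "u \<noteq> w" by auto
        have nab: "\<not> (u \<in> {a,b} \<and> w \<in> {a,b})" using uw(4) ppv by auto
        have h1: "\<not> (((u=a) \<noteq> (w=a)) \<and> ((u=b) \<noteq> (w=b)))" using nab une ab(3) by auto
        have h2: "((u\<in>{a,b}) \<noteq> (w\<in>{a,b})) = (((u=a) \<noteq> (w=a)) \<or> ((u=b) \<noteq> (w=b)))"
          using nab by blast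
        have ee: "{u,w} \<in> EE" using True uw by simp
        have "cv {a} $ {u,w} + cv {b} $ {u,w} = cv {} $ {u,w} + cv {a,b} $ {u,w}"
          unfolding cv_val[OF une] using ee h1 h2 by (simp only: singleton_iff empty_iff) auto
        then show ?thesis using uw(1) by simp
      next
        case False then show ?thesis by (simp add: cv_notE)
      qed
    qed
    have mid: "midpoint (cv {a}) (cv {b}) = midpoint (cv {}) (cv {a,b})"
      unfolding midpoint_def using sum by simp
    have nab: "cv {a} \<noteq> cv {b}"
      by (rule cv_neq[of a c]) (use inV ppv ne ab in auto)
    have inP: "cv {a} \<in> P" "cv {b} \<in> P"
      unfolding P_def XX_def using inV by (auto intro!: hull_inc)
    have "midpoint (cv {a}) (cv {b}) \<in> open_segment (cv {a}) (cv {b})" using nab by simp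
    moreover have "midpoint (cv {a}) (cv {b}) \<in> closed_segment (cv {}) (cv {a,b})"
      using mid by simp
    ultimately have "cv {a} \<in> closed_segment (cv {}) (cv {a,b})"
      using F inP unfolding face_of_def by blast
    then obtain t where t: "cv {a} = (1 - t) *\<^sub>R cv {} + t *\<^sub>R cv {a,b}"
      unfolding closed_segment_def by blast
    have e1: "{a,c} \<in> EE" "{b,c} \<in> EE" using edge_iff inV ppv by auto
    have "cv {a} $ {a,c} = 1" "cv {a,b} $ {a,c} = 1" "cv {} $ {a,c} = 0"
      using cv_val[of a c] e1 ne by auto
    then have t1: "t = 1" using arg_cong[OF t, of "\<lambda>v. v $ {a,c}"] by simp
    have "cv {a} $ {b,c} = 0" "cv {a,b} $ {b,c} = 1" "cv {} $ {b,c} = 0"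
      using cv_val[of b c] e1 ne ab by auto
    then have "t = 0" using arg_cong[OF t, of "\<lambda>v. v $ {b,c}"] by simp
    then show False using t1 by simp
  qed
  have "skel_dist P (cv {}) (cv {a,b}) = 2"
  proof (rule antisym)
    have "skel_walk P (cv {}) (cv {a,b}) 2" by (rule walk2[OF adj1 adj2])
    then show "skel_dist P (cv {}) (cv {a,b}) \<le> 2" using walk_dist by (metis enat_numeral)
  next
    show "2 \<le> skel_dist P (cv {}) (cv {a,b})"
      unfolding skel_dist_def
    proof (rule INF_greatest)
      fix k assume "k \<in> {k. skel_walk P (cv {}) (cv {a,b}) k}"
      then obtain p where p: "length p = Suc k" "hd p = cv {}" "last p = cv {a,b}"
        "\<forall>i<k. skel_adj P (p ! i) (p ! Suc i)" unfolding skel_walk_def by blast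
      have "k \<noteq> 0"
      proof
        assume "k = 0"
        then have "hd p = last p" using p(1) by (metis One_nat_def hd_conv_nth last_conv_nth length_0_conv diff_Suc_1 nat.distinct(1))
        then show False using p neq0 by simp
      qed
      moreover have "k \<noteq> 1"
      proof
        assume k1: "k = 1"
        have pn: "p \<noteq> []" using p(1) by auto
        have "hd p = p ! 0" "last p = p ! 1" using p(1) k1 pn
          by (simp_all add: hd_conv_nth last_conv_nth)
        then show False using p k1 notadj by auto
      qed
      ultimately have "2 \<le> k" by linarith
      then show "2 \<le> enat k" by (simp add: enat_numeral[symmetric])
    qed
  qed
  then show ?thesis using ext unfolding P_def by blast
qed

lemma main: "skel_diameter (cut_polytope VV EE) = 2"
  unfolding P_eq skel_diameter_def
proof (rule antisym)
  show "(SUP xy\<in>{(x, y). x extreme_point_of convex hull XX \<and> y extreme_point_of convex hull XX}.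
      skel_dist (convex hull XX) (fst xy) (snd xy)) \<le> 2"
  proof (rule SUP_least, clarsimp)
    fix x y assume "x extreme_point_of convex hull XX" "y extreme_point_of convex hull XX"
    then have "x \<in> XX" "y \<in> XX" using extreme_point_of_convex_hull by blast+
    then obtain A B where "x = cv A" "A \<subseteq> VV" "y = cv B" "B \<subseteq> VV" unfolding XX_def by blast
    then show "skel_dist (convex hull XX) x y \<le> 2" using upper by simp
  qed
next
  obtain x y where "x extreme_point_of (convex hull XX)" "y extreme_point_of (convex hull XX)"
    "skel_dist (convex hull XX) x y = 2" using lower by blast
  then show "2 \<le> (SUP xy\<in>{(x, y). x extreme_point_of convex hull XX \<and> y extreme_point_of convex hull XX}.
      skel_dist (convex hull XX) (fst xy) (snd xy))"
    by (intro SUP_upper2[of "(x,y)"]) auto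
qed

lemma main2: "skel_diameter (cut_polytope (V1 \<union> V2 \<union> V3) (tripartite_edges V1 V2 V3)) = 2"
  using main unfolding VV_def EE_def .

end

theorem theorem10:
  fixes V1 V2 V3 :: "'v::finite set"
  assumes "V1 \<inter> V2 = {}" and "V1 \<inter> V3 = {}" and "V2 \<inter> V3 = {}"
    and "card V1 \<ge> 2" and "card V2 \<ge> 2" and "card V3 \<ge> 2"
  shows "skel_diameter (cut_polytope (V1 \<union> V2 \<union> V3) (tripartite_edges V1 V2 V3)) = 2"
  by (rule main2[OF assms])

end
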